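(* For $n\in\mathbb{N}$ let $\sigma^{(n)}$ be the distribution on $[n]$ with $\sigma^{(n)}_{\le i}=1-(1-\frac in)^2$, and consider the exponential-jump process with choice distribution $\sigma^{(n)}$ in its stationary regime, i.e. with gap vector $(d_1,\dots,d_{n-1})$ distributed according to $\bigotimes_{i=1}^{n-1}\mathrm{Exp}(n\sigma^{(n)}_{\le i}-i)$. Define $g_n(x)=\mathbb{E}\big[t_{\lceil xn\rceil}-t_{\lceil n/2\rceil}\big]$ for $x\in(0,1)$. Then for every $x\in(0,1)$, \[\lim_{n\to\infty}g_n(x)=\log\Big(\frac{x}{1-x}\Big).\]
   Context: The exponential-jump process with choice distribution $\sigma$ on $[n]$: the state consists of $n$ tokens at real positions $t_1<\dots<t_n$; in each step, independently sample $i^*\sim\sigma$ and $X\sim\mathrm{Exp}(1)$, move the $i^*$-th token from the left a distance $X$ to the right, and re-sort. The gaps are $d_i=t_{i+1}-t_i$, so $t_j-t_k=\sum_{i=k}^{j-1}d_i$ for $k\le j$ (and the negative of the corresponding sum for $k>j$). $\mathrm{Exp}(\lambda)$ is the exponential distribution with rate $\lambda$ (mean $1/\lambda$); $\bigotimes$ denotes a product of independent distributions; the product distribution above is the stationary distribution of the gap vector. $\log$ is the natural logarithm. *)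

theory Defs
  imports "HOL-Probability.Probability"
begin

definition sigma_le :: "nat \<Rightarrow> nat \<Rightarrow> real" where
  "sigma_le n i = 1 - (1 - real i / real n) ^ 2"

definition gap_rate :: "nat \<Rightarrow> nat \<Rightarrow> real" where
  "gap_rate n i = real n * sigma_le n i - real i"

definition gap_measure :: "nat \<Rightarrow> (nat \<Rightarrow> real) measure" where
  "gap_measure n = PiM {1..<n} (\<lambda>i. density lborel (exponential_density (gap_rate n i)))"

text \<open>t_j - t_k expressed through the gaps d_i = t_{i+1} - t_i.\<close>
definition tdiff :: "(nat \<Rightarrow> real) \<Rightarrow> nat \<Rightarrow> nat \<Rightarrow> real" where
  "tdiff d j k = (if k \<le> j then (\<Sum>i\<in>{k..<j}. d i) else - (\<Sum>i\<in>{j..<k}. d i))"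

definition g :: "nat \<Rightarrow> real \<Rightarrow> real" where
  "g n x = (\<integral>d. tdiff d (nat \<lceil>x * real n\<rceil>) (nat \<lceil>real n / 2\<rceil>) \<partial>gap_measure n)"

end

theory Submission
  imports Defs
begin

lemma exp_hbi:
  assumes l: "0 < (l::real)"
  shows "has_bochner_integral (density lborel (exponential_density l)) (\<lambda>x. x) (1/l)"
proof -
  interpret prob_space "density lborel (exponential_density l)"
    using prob_space_exponential_density[OF l] .
  have D: "distributed (density lborel (exponential_density l)) lborel (\<lambda>x. x) (erlang_density 0 l)"
    unfolding distributed_def
    by (auto simp: distr_id2 intro: measurable_ident_sets)
  show ?thesis using has_bochner_integral_erlang_ith_moment[OF l D, of 1] l by simp
qed

lemma pim_comp:
  assumes M: "\<And>i. i \<in> I \<Longrightarrow> prob_space (M i)" and i: "i \<in> I"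
    and h: "has_bochner_integral (M i) (\<lambda>x. x) (c::real)"
  shows "has_bochner_integral (PiM I M) (\<lambda>\<omega>. \<omega> i) c"
proof -
  have meas: "(\<lambda>\<omega>. \<omega> i) \<in> measurable (PiM I M) (M i)" using i by measurable
  have e: "distr (PiM I M) (M i) (\<lambda>\<omega>. \<omega> i) = M i" by (rule distr_PiM_component[OF M i])
  have "integrable (M i) (\<lambda>x. x)" "integral\<^sup>L (M i) (\<lambda>x. x) = c" using h
    by (simp_all add: has_bochner_integral_iff)
  then have "integrable (PiM I M) (\<lambda>\<omega>. \<omega> i)" "integral\<^sup>L (PiM I M) (\<lambda>\<omega>. \<omega> i) = c"
    using integrable_distr_eq[OF meas, of "\<lambda>x. x"] integral_distr[OF meas, of "\<lambda>x. x"] e by auto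
  then show ?thesis by (simp add: has_bochner_integral_iff)
qed
definition AA :: "nat \<Rightarrow> nat \<Rightarrow> real" where
  "AA n m = harm (m - 1) - harm (n - m)"

lemma gap_rate_eq:
  assumes "1 \<le> i" "i < n"
  shows "gap_rate n i = real i * (real n - real i) / real n"
    "gap_rate n i > 0"
    "1 / gap_rate n i = 1 / real i + 1 / (real n - real i)"
proof -
  have n: "real n > 0" using assms by simp
  have ni: "real n - real i > 0" using assms by simp
  have i: "real i > 0" using assms by simp
  show e: "gap_rate n i = real i * (real n - real i) / real n"
    unfolding gap_rate_def sigma_le_def using n by (simp add: field_simps power2_eq_square)
  show "gap_rate n i > 0" unfolding e using n ni i by simp
  show "1 / gap_rate n i = 1 / real i + 1 / (real n - real i)"
    unfolding e using n ni i by (simp add: field_simps)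
qed

lemma telesc:
  assumes "1 \<le> a" "a \<le> b" "b \<le> n"
  shows "(\<Sum>i\<in>{a..<b}. 1 / gap_rate n i) = AA n b - AA n a"
  using assms(2,3)
proof (induction b rule: dec_induct)
  case base
  then show ?case by simp
next
  case (step b)
  have ib: "(\<Sum>i\<in>{a..<b}. 1 / gap_rate n i) = AA n b - AA n a" using step by simp
  have b1: "1 \<le> b" "b < n" using step assms by auto
  obtain b' where b': "b = Suc b'" using b1 by (cases b) auto
  obtain m where m: "n - b = Suc m" using b1 by (cases "n - b") auto
  have m2: "n - Suc b = m" using m by simp
  have "AA n (Suc b) - AA n b = harm b - harm b' + harm (n - b) - harm m"
    unfolding AA_def using b' m2 by simp
  also have "\<dots> = 1 / real b + 1 / real (n - b)"
  proof -
    have "harm b = harm b' + 1 / real b" using b' by (simp add: harm_Suc inverse_eq_divide)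
    moreover have "harm (n - b) = harm m + 1 / real (n - b)" using m by (simp add: harm_Suc inverse_eq_divide)
    ultimately show ?thesis by simp
  qed
  also have "\<dots> = 1 / gap_rate n b"
    using gap_rate_eq(3)[OF b1] b1 by (simp add: of_nat_diff)
  finally show ?case using ib step by simp
qed

lemma g_eq:
  assumes "1 \<le> n" "1 \<le> j" "j \<le> n" "1 \<le> k" "k \<le> n"
    and that: "nat \<lceil>x * real n\<rceil> = j" "nat \<lceil>real n / 2\<rceil> = k"
  shows "g n x = AA n j - AA n k"
proof -
  let ?M = "\<lambda>i. density lborel (exponential_density (gap_rate n i))"
  have ps: "\<And>i. i \<in> {1..<n} \<Longrightarrow> prob_space (?M i)"
    using gap_rate_eq(2) prob_space_exponential_density by auto
  have hb: "has_bochner_integral (gap_measure n) (\<lambda>d. \<Sum>i\<in>S. d i) (\<Sum>i\<in>S. 1 / gap_rate n i)"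
    if S: "S \<subseteq> {1..<n}" for S
  proof -
    have "finite S" using S finite_subset by blast
    then show ?thesis unfolding gap_measure_def
      apply (intro has_bochner_integral_sum)
      apply (rule pim_comp[OF ps])
      using S gap_rate_eq(2) exp_hbi by auto
  qed
  show ?thesis
  proof (cases "k \<le> j")
    case True
    have "has_bochner_integral (gap_measure n) (\<lambda>d. tdiff d j k) (AA n j - AA n k)"
      using hb[of "{k..<j}"] assms True telesc[of k j n] unfolding tdiff_def by auto
    then show ?thesis unfolding g_def using that by (simp add: has_bochner_integral_integral_eq)
  next
    case False
    have "has_bochner_integral (gap_measure n) (\<lambda>d. - (\<Sum>i\<in>{j..<k}. d i)) (- (AA n k - AA n j))"
      using has_bochner_integral_minus[OF hb[of "{j..<k}"]] assms False telesc[of j k n] by auto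
    then have "has_bochner_integral (gap_measure n) (\<lambda>d. tdiff d j k) (AA n j - AA n k)"
      using False unfolding tdiff_def by simp
    then show ?thesis unfolding g_def using that by (simp add: has_bochner_integral_integral_eq)
  qed
qed

lemma AA_lim:
  fixes y :: real
  assumes y0: "0 < y" and y1: "y < 1"
  shows "(\<lambda>n. AA n (nat \<lceil>y * real n\<rceil>)) \<longlonglongrightarrow> ln (y / (1 - y))"
proof -
  define J where "J n = nat \<lceil>y * real n\<rceil>" for n
  have rJ: "real (J n) = of_int \<lceil>y * real n\<rceil>" for n
    unfolding J_def using y0 by (simp add: J_def)
  have lo: "y * real n \<le> real (J n)" for n unfolding rJ by linarith
  have hi: "real (J n) < y * real n + 1" for n unfolding rJ by linarith
  have J1: "1 \<le> J n" if "1 \<le> n" for n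
  proof -
    have "0 < y * real n" using that y0 by simp
    then show ?thesis using lo[of n] by linarith
  qed
  have Jn: "J n \<le> n" for n
  proof -
    have h: "y * real n \<le> real n" using y0 y1 by (intro mult_left_le_one_le) auto
    then show ?thesis unfolding J_def by simp
  qed
  have hj: "(\<lambda>n. real (J n) / real n) \<longlonglongrightarrow> y"
  proof (rule tendsto_sandwich[of "\<lambda>n. y" _ _ "\<lambda>n. y + 1 / real n"])
    show "\<forall>\<^sub>F n in sequentially. y \<le> real (J n) / real n"
      using eventually_ge_at_top[of "1::nat"]
      by eventually_elim (use lo in \<open>auto simp: field_simps\<close>)
    show "\<forall>\<^sub>F n in sequentially. real (J n) / real n \<le> y + 1 / real n"
      using eventually_ge_at_top[of "1::nat"]
      by eventually_elim (use hi in \<open>auto simp: field_simps less_imp_le\<close>)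
    show "(\<lambda>n. y) \<longlonglongrightarrow> y" by simp
    show "(\<lambda>n. y + 1 / real n) \<longlonglongrightarrow> y"
      using tendsto_add[OF tendsto_const[of y] lim_1_over_n] by simp
  qed
  have ypos: "filterlim (\<lambda>n. c * real n) at_top sequentially" if "c > 0" for c :: real
    by (rule filterlim_tendsto_pos_mult_at_top[OF tendsto_const that filterlim_real_sequentially])
  have ha: "filterlim (\<lambda>n. J n - 1) at_top sequentially"
    unfolding filterlim_at_top
  proof
    fix Z :: nat
    have "\<forall>\<^sub>F n in sequentially. real Z + 2 \<le> y * real n"
      using ypos[OF y0] unfolding filterlim_at_top by blast
    then show "\<forall>\<^sub>F n in sequentially. Z \<le> J n - 1"
      by eventually_elim (use lo in \<open>smt (verit) of_nat_1 of_nat_add of_nat_le_iff le_diff_conv\<close>)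
  qed
  have hb: "filterlim (\<lambda>n. n - J n) at_top sequentially"
    unfolding filterlim_at_top
  proof
    fix Z :: nat
    have "\<forall>\<^sub>F n in sequentially. real Z + 2 \<le> (1 - y) * real n"
      using ypos[of "1 - y"] y1 unfolding filterlim_at_top by auto
    then show "\<forall>\<^sub>F n in sequentially. Z \<le> n - J n"
    proof eventually_elim
      case (elim n)
      have "real Z + 1 \<le> real n - real (J n)" using elim hi[of n] by (simp add: algebra_simps)
      then have "real Z \<le> real (n - J n)" using Jn[of n] by (simp add: of_nat_diff)
      then show ?case by simp
    qed
  qed
  have e1: "(\<lambda>n. harm (J n - 1) - ln (real (J n - 1))) \<longlonglongrightarrow> (euler_mascheroni :: real)"
    using filterlim_compose[OF euler_mascheroni_LIMSEQ ha] by simp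
  have e2: "(\<lambda>n. harm (n - J n) - ln (real (n - J n))) \<longlonglongrightarrow> (euler_mascheroni :: real)"
    using filterlim_compose[OF euler_mascheroni_LIMSEQ hb] by simp
  have l1: "(\<lambda>n. real (J n) / real n - 1 / real n) \<longlonglongrightarrow> y"
    using tendsto_diff[OF hj lim_1_over_n] by simp
  have l2: "(\<lambda>n. 1 - real (J n) / real n) \<longlonglongrightarrow> 1 - y"
    using tendsto_diff[OF tendsto_const hj] by simp
  have e3: "(\<lambda>n. ln (real (J n) / real n - 1 / real n) - ln (1 - real (J n) / real n))
      \<longlonglongrightarrow> ln y - ln (1 - y)"
    using y0 y1 by (intro tendsto_diff tendsto_ln l1 l2) auto
  have tot: "(\<lambda>n. (harm (J n - 1) - ln (real (J n - 1))) - (harm (n - J n) - ln (real (n - J n)))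
       + (ln (real (J n) / real n - 1 / real n) - ln (1 - real (J n) / real n)))
      \<longlonglongrightarrow> euler_mascheroni - euler_mascheroni + (ln y - ln (1 - y))"
    by (intro tendsto_add tendsto_diff e1 e2 e3)
  have ev: "\<forall>\<^sub>F n in sequentially. (harm (J n - 1) - ln (real (J n - 1))) - (harm (n - J n) - ln (real (n - J n)))
       + (ln (real (J n) / real n - 1 / real n) - ln (1 - real (J n) / real n)) = AA n (J n)"
    using eventually_conj[OF eventually_conj[OF eventually_ge_at_top[of "1::nat"]
        filterlim_at_top[THEN iffD1, OF ha, rule_format, of 1]]
        filterlim_at_top[THEN iffD1, OF hb, rule_format, of 1]]
  proof eventually_elim
    case (elim n)
    have n: "real n > 0" using elim by simp
    have a: "real (J n) / real n - 1 / real n = real (J n - 1) / real n"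
    proof -
      have "1 \<le> J n" using elim by auto
      then have "real (J n - 1) = real (J n) - 1" by (simp add: of_nat_diff)
      then show ?thesis by (simp add: diff_divide_distrib)
    qed
    have b: "1 - real (J n) / real n = real (n - J n) / real n"
      using Jn[of n] n by (simp add: of_nat_diff field_simps)
    have pa: "real (J n - 1) > 0" "real (n - J n) > 0" using elim by auto
    show ?case unfolding a b AA_def using pa n by (simp add: ln_div)
  qed
  have "ln y - ln (1 - y) = ln (y / (1 - y))" using y0 y1 by (simp add: ln_div)
  then show ?thesis using Lim_transform_eventually[OF tot ev] unfolding J_def by simp
qed

theorem corollary13:
  fixes x :: real
  assumes "0 < x" and "x < 1"
  shows "(\<lambda>n. g n x) \<longlonglongrightarrow> ln (x / (1 - x))"
proof -
  have L: "(\<lambda>n. AA n (nat \<lceil>x * real n\<rceil>) - AA n (nat \<lceil>(1/2) * real n\<rceil>))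
      \<longlonglongrightarrow> ln (x / (1 - x)) - ln ((1/2) / (1 - 1/2))"
    by (intro tendsto_diff AA_lim) (use assms in auto)
  have ev: "\<forall>\<^sub>F n in sequentially.
      AA n (nat \<lceil>x * real n\<rceil>) - AA n (nat \<lceil>(1/2) * real n\<rceil>) = g n x"
    using eventually_ge_at_top[of "1::nat"]
  proof eventually_elim
    case (elim n)
    have h: "(1/2) * real n = real n / 2" by simp
    have xn: "x * real n \<le> real n" using assms by (intro mult_left_le_one_le) auto
    have xp: "0 < x * real n" using assms elim by simp
    have "1 \<le> nat \<lceil>x * real n\<rceil>" using xp by linarith
    moreover have "nat \<lceil>x * real n\<rceil> \<le> n" using xn by simp
    moreover have "1 \<le> nat \<lceil>real n / 2\<rceil>" using elim by linarith
    moreover have "nat \<lceil>real n / 2\<rceil> \<le> n" by linarith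
    ultimately show ?case unfolding h using g_eq elim by simp
  qed
  show ?thesis using Lim_transform_eventually[OF L ev] by simp
qed

end
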